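(* For every integer $d \geq 2$ and all integers $s_1, \ldots, s_k \geq 1$, $$\frac{s_1}{s_1+\ldots+s_k}\mathsf {Brac}_{d,s_1}+\ldots+\frac{s_k}{s_1+\ldots+s_k}\mathsf {Brac}_{d,s_k}\subseteq \mathsf {Brac}_{d,s_1+\ldots+s_k}.$$ In particular, for all $s \geq 1$, $\mathsf {Brac}_{d,1} =\mathsf {Brac}_{d} \subseteq \mathsf {Brac}_{d,s}$.
   Context: $\Delta_d=\{\alpha\in\mathbb R^d:\alpha_i\ge0,\ \sum_i\alpha_i=1\}$; pairs $(\alpha,\beta)\in\Delta_d^2$ are added and scaled componentwise. $\mathsf{Brac}_d=\{(\alpha,\beta)\in\Delta_d^2:\ \forall i,\ \sqrt{\alpha_i\beta_i}\le\sum_{j\ne i}\sqrt{\alpha_j\beta_j}\}$. For $s\ge1$, $\mathsf{Brac}_{d,s}$ is the set of $(\alpha,\beta)\in\Delta_d^2$ for which there exist $A_1,\dots,A_d,B_1,\dots,B_d\in M_s(\mathbb C)$ with $\sum_i A_iA_i^*=\sum_iB_iB_i^*=I_s$, $\sum_iA_iB_i^*=0$, and $\tfrac1s\|A_i\|_F^2=\alpha_i$, $\tfrac1s\|B_i\|_F^2=\beta_i$ for all $i$, where $\|X\|_F=\operatorname{Tr}(XX^* )^{1/2}$. *)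

theory Defs
  imports Complex_Main "Jordan_Normal_Form.Schur_Decomposition"
begin

(* The index set {1..d} is modelled by a finite type 'd with CARD('d) = d. *)

definition simplex :: "('d::finite \<Rightarrow> real) set" where
  "simplex = {a. (\<forall>i. 0 \<le> a i) \<and> (\<Sum>i\<in>UNIV. a i) = 1}"

definition Brac :: "(('d::finite \<Rightarrow> real) \<times> ('d \<Rightarrow> real)) set" where
  "Brac = {(a, b). a \<in> simplex \<and> b \<in> simplex \<and>
      (\<forall>i. sqrt (a i * b i) \<le> (\<Sum>j\<in>UNIV - {i}. sqrt (a j * b j)))}"

definition msum :: "nat \<Rightarrow> ('d::finite \<Rightarrow> complex mat) \<Rightarrow> complex mat" where
  "msum s F = mat s s (\<lambda>(p, q). \<Sum>i\<in>UNIV. F i $$ (p, q))"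

(* squared Frobenius norm, ||X||_F^2 = Tr(X X^* ) *)
definition frob2 :: "complex mat \<Rightarrow> real" where
  "frob2 X = (\<Sum>p<dim_row X. \<Sum>q<dim_col X. (cmod (X $$ (p, q)))\<^sup>2)"

definition Brac_s :: "nat \<Rightarrow> (('d::finite \<Rightarrow> real) \<times> ('d \<Rightarrow> real)) set" where
  "Brac_s s = {(a, b). a \<in> simplex \<and> b \<in> simplex \<and>
      (\<exists>A B :: 'd \<Rightarrow> complex mat.
         (\<forall>i. A i \<in> carrier_mat s s \<and> B i \<in> carrier_mat s s) \<and>
         msum s (\<lambda>i. A i * mat_adjoint (A i)) = 1\<^sub>m s \<and>
         msum s (\<lambda>i. B i * mat_adjoint (B i)) = 1\<^sub>m s \<and>
         msum s (\<lambda>i. A i * mat_adjoint (B i)) = 0\<^sub>m s s \<and>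
         (\<forall>i. frob2 (A i) / real s = a i \<and> frob2 (B i) / real s = b i))}"

end

theory Submission
  imports Defs
begin


lemma sum_lessThan_add_split:
  "(\<Sum>i<a+(b::nat). f i) = (\<Sum>i<a. f i) + (\<Sum>i<b. f (a+i))"
  by (induction b) (auto simp: add.assoc)

lemma adj_carrier[simp]: "A \<in> carrier_mat n m \<Longrightarrow> mat_adjoint A \<in> carrier_mat m n"
  unfolding mat_adjoint_def by auto

lemma adj_index: "A \<in> carrier_mat n m \<Longrightarrow> i < m \<Longrightarrow> j < n \<Longrightarrow>
   mat_adjoint A $$ (i,j) = cnj (A $$ (j,i))"
  unfolding mat_adjoint_def by (simp add: mat_of_rows_def conjugate_complex_def)

definition bd :: "nat \<Rightarrow> nat \<Rightarrow> complex mat \<Rightarrow> complex mat \<Rightarrow> complex mat" where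
  "bd n m X Y = four_block_mat X (0\<^sub>m n m) (0\<^sub>m m n) Y"

lemma bd_carrier[simp]: "X \<in> carrier_mat n n \<Longrightarrow> Y \<in> carrier_mat m m \<Longrightarrow> bd n m X Y \<in> carrier_mat (n+m) (n+m)"
  unfolding bd_def by auto

lemma bd_index: assumes "X \<in> carrier_mat n n" "Y \<in> carrier_mat m m" "p < n+m" "q < n+m"
  shows "bd n m X Y $$ (p,q) = (if p<n \<and> q<n then X$$(p,q) else if n\<le>p \<and> n\<le>q then Y$$(p-n,q-n) else 0)"
  using assms by (auto simp: bd_def)

lemma bd_adj: assumes "X \<in> carrier_mat n n" "Y \<in> carrier_mat m m"
  shows "mat_adjoint (bd n m X Y) = bd n m (mat_adjoint X) (mat_adjoint Y)"
proof -
  have c: "bd n m X Y \<in> carrier_mat (n+m) (n+m)" using assms by simp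
  have [simp]: "dim_row (mat_adjoint X) = n" "dim_col (mat_adjoint X) = n"
     "dim_row (mat_adjoint Y) = m" "dim_col (mat_adjoint Y) = m"
    using adj_carrier[OF assms(1)] adj_carrier[OF assms(2)] by auto
  show ?thesis
  proof (rule eq_matI)
    fix i j assume ij: "i < dim_row (bd n m (mat_adjoint X) (mat_adjoint Y))"
         "j < dim_col (bd n m (mat_adjoint X) (mat_adjoint Y))"
    hence i: "i < n+m" and j: "j < n+m" using assms by (auto simp: bd_def)
    show "mat_adjoint (bd n m X Y) $$ (i, j) = bd n m (mat_adjoint X) (mat_adjoint Y) $$ (i, j)"
      using assms i j adj_index[OF assms(2), of "i-n" "j-n"]
      by (auto simp: adj_index[OF c i j] bd_index[OF assms j i] bd_index[OF adj_carrier[OF assms(1)] adj_carrier[OF assms(2)] i j] adj_index[OF assms(1)] adj_index[OF assms(2)])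
  next
    show "dim_row (mat_adjoint (bd n m X Y)) = dim_row (bd n m (mat_adjoint X) (mat_adjoint Y))"
      using adj_carrier[OF c] bd_carrier[OF adj_carrier[OF assms(1)] adj_carrier[OF assms(2)]] by simp
    show "dim_col (mat_adjoint (bd n m X Y)) = dim_col (bd n m (mat_adjoint X) (mat_adjoint Y))"
      using adj_carrier[OF c] bd_carrier[OF adj_carrier[OF assms(1)] adj_carrier[OF assms(2)]] by simp
  qed
qed

lemma bd_mult: assumes "X \<in> carrier_mat n n" "Y \<in> carrier_mat m m" "X' \<in> carrier_mat n n" "Y' \<in> carrier_mat m m"
  shows "bd n m X Y * bd n m X' Y' = bd n m (X * X') (Y * Y')"
  unfolding bd_def using assms
  using assms by (simp add: mult_four_block_mat[OF assms(1) zero_carrier_mat zero_carrier_mat assms(2) assms(3) zero_carrier_mat zero_carrier_mat assms(4)])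

lemma bd_msum: assumes "\<And>i. F i \<in> carrier_mat n n" "\<And>i. G i \<in> carrier_mat m m"
  shows "msum (n+m) (\<lambda>i. bd n m (F i) (G i)) = bd n m (msum n F) (msum m G)"
proof (rule eq_matI)
  fix p q assume "p < dim_row (bd n m (msum n F) (msum m G))" "q < dim_col (bd n m (msum n F) (msum m G))"
  hence p: "p < n+m" and q: "q < n+m" by (auto simp: bd_def msum_def)
  show "msum (n + m) (\<lambda>i. bd n m (F i) (G i)) $$ (p, q) = bd n m (msum n F) (msum m G) $$ (p, q)"
    using p q assms by (auto simp: msum_def bd_index)
qed (auto simp: msum_def bd_def)

lemma frob2_bd: assumes "X \<in> carrier_mat n n" "Y \<in> carrier_mat m m"
  shows "frob2 (bd n m X Y) = frob2 X + frob2 Y"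
  using assms by (simp add: frob2_def bd_def sum_lessThan_add_split sum.distrib)

lemma simplex_comb: assumes "a \<in> simplex" "a' \<in> simplex" "0 \<le> t" "0 \<le> u" "t + u = 1"
  shows "(\<lambda>i. t * a i + u * a' i) \<in> simplex"
  using assms unfolding simplex_def
  by (auto simp: sum.distrib sum_distrib_left[symmetric] intro!: add_nonneg_nonneg mult_nonneg_nonneg)

lemma brac_s_bin:
  fixes a b a' b' :: "'d::finite \<Rightarrow> real"
  assumes "(a,b) \<in> Brac_s n" "(a',b') \<in> Brac_s m" "n \<ge> 1" "m \<ge> 1"
  shows "((\<lambda>i. real n/real (n+m) * a i + real m/real (n+m) * a' i),
          (\<lambda>i. real n/real (n+m) * b i + real m/real (n+m) * b' i)) \<in> Brac_s (n+m)"
proof -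
  obtain A B :: "'d \<Rightarrow> complex mat" where
    AB: "\<forall>i. A i \<in> carrier_mat n n \<and> B i \<in> carrier_mat n n"
    "msum n (\<lambda>i. A i * mat_adjoint (A i)) = 1\<^sub>m n"
    "msum n (\<lambda>i. B i * mat_adjoint (B i)) = 1\<^sub>m n"
    "msum n (\<lambda>i. A i * mat_adjoint (B i)) = 0\<^sub>m n n"
    "\<forall>i. frob2 (A i) / real n = a i \<and> frob2 (B i) / real n = b i"
    and sa: "a \<in> simplex" "b \<in> simplex"
    using assms(1) unfolding Brac_s_def by blast
  obtain A' B' :: "'d \<Rightarrow> complex mat" where
    AB': "\<forall>i. A' i \<in> carrier_mat m m \<and> B' i \<in> carrier_mat m m"
    "msum m (\<lambda>i. A' i * mat_adjoint (A' i)) = 1\<^sub>m m"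
    "msum m (\<lambda>i. B' i * mat_adjoint (B' i)) = 1\<^sub>m m"
    "msum m (\<lambda>i. A' i * mat_adjoint (B' i)) = 0\<^sub>m m m"
    "\<forall>i. frob2 (A' i) / real m = a' i \<and> frob2 (B' i) / real m = b' i"
    and sa': "a' \<in> simplex" "b' \<in> simplex"
    using assms(2) unfolding Brac_s_def by blast
  have t: "0 \<le> real n/real (n+m)" "0 \<le> real m/real (n+m)" "real n/real (n+m) + real m/real (n+m) = 1"
    using assms(3,4) by (auto simp: add_divide_distrib[symmetric])
  have s1: "(\<lambda>i. real n/real (n+m) * a i + real m/real (n+m) * a' i) \<in> simplex"
    by (rule simplex_comb[OF sa(1) sa'(1) t])
  have s2: "(\<lambda>i. real n/real (n+m) * b i + real m/real (n+m) * b' i) \<in> simplex"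
    by (rule simplex_comb[OF sa(2) sa'(2) t])
  define AA where "AA i = bd n m (A i) (A' i)" for i
  define BB where "BB i = bd n m (B i) (B' i)" for i
  have cA: "\<And>i. A i \<in> carrier_mat n n" "\<And>i. B i \<in> carrier_mat n n"
    "\<And>i. A' i \<in> carrier_mat m m" "\<And>i. B' i \<in> carrier_mat m m" using AB(1) AB'(1) by auto
  have m1: "msum (n+m) (\<lambda>i. AA i * mat_adjoint (AA i)) = 1\<^sub>m (n+m)"
    unfolding AA_def bd_adj[OF cA(1) cA(3)] bd_mult[OF cA(1) cA(3) adj_carrier[OF cA(1)] adj_carrier[OF cA(3)]]
    bd_msum[OF mult_carrier_mat[OF cA(1) adj_carrier[OF cA(1)]] mult_carrier_mat[OF cA(3) adj_carrier[OF cA(3)]]]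
    AB(2) AB'(2) by (simp add: bd_def)
  have m2: "msum (n+m) (\<lambda>i. BB i * mat_adjoint (BB i)) = 1\<^sub>m (n+m)"
    unfolding BB_def bd_adj[OF cA(2) cA(4)] bd_mult[OF cA(2) cA(4) adj_carrier[OF cA(2)] adj_carrier[OF cA(4)]]
    bd_msum[OF mult_carrier_mat[OF cA(2) adj_carrier[OF cA(2)]] mult_carrier_mat[OF cA(4) adj_carrier[OF cA(4)]]]
    AB(3) AB'(3) by (simp add: bd_def)
  have m3: "msum (n+m) (\<lambda>i. AA i * mat_adjoint (BB i)) = 0\<^sub>m (n+m) (n+m)"
    unfolding AA_def BB_def bd_adj[OF cA(2) cA(4)] bd_mult[OF cA(1) cA(3) adj_carrier[OF cA(2)] adj_carrier[OF cA(4)]]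
    bd_msum[OF mult_carrier_mat[OF cA(1) adj_carrier[OF cA(2)]] mult_carrier_mat[OF cA(3) adj_carrier[OF cA(4)]]]
    AB(4) AB'(4) by (simp add: bd_def)
  have fr: "\<forall>i. frob2 (AA i) / real (n+m) = real n/real (n+m) * a i + real m/real (n+m) * a' i
     \<and> frob2 (BB i) / real (n+m) = real n/real (n+m) * b i + real m/real (n+m) * b' i"
  proof
    fix i
    have e: "frob2 (A i) = real n * a i" "frob2 (A' i) = real m * a' i"
      "frob2 (B i) = real n * b i" "frob2 (B' i) = real m * b' i"
      using AB(5) AB'(5) assms(3,4) by (auto simp: field_simps)
    show "frob2 (AA i) / real (n+m) = real n/real (n+m) * a i + real m/real (n+m) * a' i
     \<and> frob2 (BB i) / real (n+m) = real n/real (n+m) * b i + real m/real (n+m) * b' i"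
      unfolding AA_def BB_def frob2_bd[OF cA(1) cA(3)] frob2_bd[OF cA(2) cA(4)] e
      by (simp add: add_divide_distrib)
  qed
  have cc: "\<forall>i. AA i \<in> carrier_mat (n+m) (n+m) \<and> BB i \<in> carrier_mat (n+m) (n+m)"
    using cA by (simp add: AA_def BB_def)
  show ?thesis unfolding Brac_s_def
    using s1 s2 cc m1 m2 m3 fr by blast
qed

lemma brac_s_sum:
  fixes P :: "nat \<Rightarrow> ('d::finite \<Rightarrow> real) \<times> ('d \<Rightarrow> real)"
  shows "k \<ge> 1 \<Longrightarrow> \<forall>j<k. s j \<ge> 1 \<Longrightarrow> \<forall>j<k. P j \<in> Brac_s (s j) \<Longrightarrow>
    ((\<lambda>i. \<Sum>j<k. real (s j) / real (\<Sum>l<k. s l) * fst (P j) i),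
     (\<lambda>i. \<Sum>j<k. real (s j) / real (\<Sum>l<k. s l) * snd (P j) i)) \<in> Brac_s (\<Sum>l<k. s l)"
proof (induction k)
  case 0
  then show ?case by simp
next
  case (Suc k)
  show ?case
  proof (cases "k = 0")
    case True
    have "s 0 \<ge> 1" using Suc.prems by auto
    then have "((\<lambda>i. \<Sum>j<Suc k. real (s j) / real (\<Sum>l<Suc k. s l) * fst (P j) i),
     (\<lambda>i. \<Sum>j<Suc k. real (s j) / real (\<Sum>l<Suc k. s l) * snd (P j) i)) = P 0"
      using True by (simp add: prod_eq_iff)
    then show ?thesis using Suc.prems True by simp
  next
    case False
    define S where "S = (\<Sum>l<k. s l)"
    have IH: "((\<lambda>i. \<Sum>j<k. real (s j) / real S * fst (P j) i),
     (\<lambda>i. \<Sum>j<k. real (s j) / real S * snd (P j) i)) \<in> Brac_s S"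
      using Suc.IH Suc.prems False unfolding S_def by auto
    have S1: "S \<ge> 1"
    proof -
      have "s 0 \<le> S" unfolding S_def using False
        by (intro member_le_sum) auto
      then show ?thesis using Suc.prems False by auto
    qed
    have sk: "s k \<ge> 1" "P k \<in> Brac_s (s k)" using Suc.prems by auto
    have Pk: "(fst (P k), snd (P k)) \<in> Brac_s (s k)" using sk by simp
    have B: "((\<lambda>i. real S/real (S+s k) * (\<Sum>j<k. real (s j) / real S * fst (P j) i) + real (s k)/real (S+s k) * fst (P k) i),
          (\<lambda>i. real S/real (S+s k) * (\<Sum>j<k. real (s j) / real S * snd (P j) i) + real (s k)/real (S+s k) * snd (P k) i)) \<in> Brac_s (S + s k)"
      by (rule brac_s_bin[OF IH Pk S1 sk(1)])
    have e: "real S/real (S+s k) * (\<Sum>j<k. real (s j) / real S * f j) = (\<Sum>j<k. real (s j) / real (S + s k) * f j)" for f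
      using S1 by (simp add: sum_distrib_left)
    have tot: "(\<Sum>l<Suc k. s l) = S + s k" by (simp add: S_def)
    show ?thesis using B unfolding tot e by simp
  qed
qed



lemma partition_lemma:
  fixes r :: "'a \<Rightarrow> real"
  assumes "finite J"
  shows "(\<forall>j\<in>J. 0 \<le> r j \<and> r j \<le> c) \<Longrightarrow> x - sum r J \<le> c \<Longrightarrow> -c \<le> x + sum r J \<Longrightarrow>
    \<exists>S\<subseteq>J. \<bar>x + sum r S - sum r (J - S)\<bar> \<le> c"
  using assms
proof (induction J arbitrary: x rule: finite_induct)
  case empty
  then show ?case by auto
next
  case (insert j J)
  have rj: "0 \<le> r j" "r j \<le> c" using insert.prems by auto
  have sJ: "0 \<le> sum r J" using insert.prems by (auto intro: sum_nonneg)
  have h1: "x - r j - sum r J \<le> c" "-c \<le> x + r j + sum r J"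
    using insert.prems insert.hyps by auto
  show ?case
  proof (cases "x + r j - sum r J \<le> c")
    case True
    then obtain S where S: "S \<subseteq> J" "\<bar>(x + r j) + sum r S - sum r (J - S)\<bar> \<le> c"
      using insert.IH[of "x + r j"] insert.prems h1 by auto
    have "j \<notin> S" using S insert.hyps by auto
    have fS: "finite S" using S(1) insert.hyps(1) by (rule finite_subset)
    then have "sum r (insert j S) = r j + sum r S" using \<open>j \<notin> S\<close> by simp
    moreover have "insert j J - insert j S = J - S" using insert.hyps by auto
    ultimately show ?thesis using S by (intro exI[of _ "insert j S"]) auto
  next
    case False
    then have "-c \<le> x - r j + sum r J" using rj sJ h1 by linarith
    then obtain S where S: "S \<subseteq> J" "\<bar>(x - r j) + sum r S - sum r (J - S)\<bar> \<le> c"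
      using insert.IH[of "x - r j"] insert.prems h1 by auto
    have "insert j J - S = insert j (J - S)" using S insert.hyps by auto
    moreover have "sum r (insert j (J - S)) = r j + sum r (J - S)" using insert.hyps by auto
    ultimately show ?thesis using S by (intro exI[of _ S]) auto
  qed
qed

lemma triangle_lemma:
  fixes P N c :: real
  assumes "0 \<le> P" "0 \<le> N" "0 \<le> c" "\<bar>P - N\<bar> \<le> c" "c \<le> P + N"
  shows "\<exists>w. cmod w = 1 \<and> cmod (complex_of_real P + complex_of_real N * w) = c"
proof (cases "P = 0 \<or> N = 0")
  case True
  then have "c = P + N" using assms by auto
  then show ?thesis using assms by (intro exI[of _ 1]) (auto simp flip: of_real_add)
next
  case False
  then have PN: "P > 0" "N > 0" using assms by auto
  define k where "k = (c^2 - P^2 - N^2) / (2*P*N)"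
  have "c^2 \<le> (P+N)^2" using assms by (intro power_mono) auto
  then have k1: "k \<le> 1" using PN unfolding k_def by (simp add: divide_le_eq power2_eq_square algebra_simps)
  have "(P-N)^2 \<le> c^2" using assms by (metis abs_le_square_iff abs_of_nonneg)
  then have k2: "-1 \<le> k" using PN unfolding k_def by (simp add: le_divide_eq power2_eq_square algebra_simps)
  define th where "th = arccos k"
  have ck: "cos th = k" using k1 k2 by (simp add: th_def cos_arccos)
  define w where "w = cis th"
  have "(cmod (complex_of_real P + complex_of_real N * w))^2 = (P + N * cos th)^2 + (N * sin th)^2"
    by (simp add: w_def cmod_power2)
  also have "\<dots> = P^2 + N^2 + 2*P*N*cos th"
  proof -
    have g: "(P + N * x)^2 + (N * y)^2 = P^2 + 2*P*N*x + N^2 * (x^2 + y^2)" for x y :: real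
      by (simp add: power2_eq_square algebra_simps)
    show ?thesis unfolding g[of "cos th" "sin th"] by simp
  qed
  also have "\<dots> = c^2" using PN by (simp add: ck k_def)
  finally have "cmod (complex_of_real P + complex_of_real N * w) = c"
    using assms(3) by (simp add: power2_eq_iff_nonneg)
  then show ?thesis by (intro exI[of _ w]) (simp add: w_def)
qed

lemma polygon:
  fixes r :: "'d::finite \<Rightarrow> real"
  assumes "\<forall>i. 0 \<le> r i" "\<forall>i. r i \<le> (\<Sum>j\<in>UNIV - {i}. r j)"
  shows "\<exists>u. (\<forall>i. cmod (u i) = 1) \<and> (\<Sum>i\<in>UNIV. complex_of_real (r i) * u i) = 0"
proof -
  obtain i0 where i0: "\<forall>j. r j \<le> r i0"
    using Max_in[of "range r"] Max_ge[of "range r"] by (metis finite_UNIV finite_imageI image_iff rangeI UNIV_not_empty image_is_empty)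
  define J where "J = UNIV - {i0}"
  define c where "c = r i0"
  have c0: "0 \<le> c" using assms c_def by auto
  have cJ: "c \<le> sum r J" using assms(2) unfolding c_def J_def by auto
  have sJ: "0 \<le> sum r J" using assms(1) by (auto intro: sum_nonneg)
  obtain S where S: "S \<subseteq> J" "\<bar>0 + sum r S - sum r (J - S)\<bar> \<le> c"
    using partition_lemma[of J r c 0] assms(1) i0 cJ c0 sJ unfolding c_def J_def by auto
  define P where "P = sum r S"
  define N where "N = sum r (J - S)"
  have fin: "finite S" "finite (J - S)" by auto
  have PN: "P + N = sum r J" unfolding P_def N_def using S(1)
    by (metis Diff_partition Diff_disjoint finite finite_Diff sum.union_disjoint)
  have P0: "0 \<le> P" "0 \<le> N" unfolding P_def N_def using assms(1) by (auto intro: sum_nonneg)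
  obtain w where w: "cmod w = 1" "cmod (complex_of_real P + complex_of_real N * w) = c"
    using triangle_lemma[OF P0 c0] S(2) PN cJ unfolding P_def N_def by auto
  define z where "z = complex_of_real P + complex_of_real N * w"
  define v where "v = (if c = 0 then 1 else - z / complex_of_real c)"
  have zc: "cmod z = c" using w(2) by (simp add: z_def)
  have v: "cmod v = 1" using zc c0 by (auto simp: v_def norm_divide)
  have cv: "complex_of_real c * v + z = 0"
  proof (cases "c = 0")
    case True then show ?thesis using w unfolding z_def v_def by simp
  next
    case False then show ?thesis unfolding v_def by (simp add: field_simps)
  qed
  define u where "u j = (if j = i0 then v else if j \<in> S then 1 else w)" for j
  have i0S: "i0 \<notin> S" using S J_def by auto
  have "(\<Sum>i\<in>UNIV. complex_of_real (r i) * u i)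
      = complex_of_real (r i0) * u i0 + (\<Sum>i\<in>J. complex_of_real (r i) * u i)"
    unfolding J_def by (simp add: sum.remove[of UNIV i0])
  also have "(\<Sum>i\<in>J. complex_of_real (r i) * u i) = (\<Sum>i\<in>S. complex_of_real (r i) * u i) + (\<Sum>i\<in>J - S. complex_of_real (r i) * u i)"
    using S(1) by (metis Diff_partition Diff_disjoint finite finite_Diff sum.union_disjoint)
  also have "(\<Sum>i\<in>S. complex_of_real (r i) * u i) = complex_of_real P"
    unfolding P_def u_def using i0S by (auto intro!: sum.cong)
  also have "(\<Sum>i\<in>J - S. complex_of_real (r i) * u i) = complex_of_real N * w"
    unfolding N_def u_def J_def by (auto simp: sum_distrib_right intro!: sum.cong)
  also have "complex_of_real (r i0) * u i0 = complex_of_real c * v" by (simp add: u_def c_def)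
  finally have "(\<Sum>i\<in>UNIV. complex_of_real (r i) * u i) = complex_of_real c * v + z" by (simp add: z_def add.assoc)
  with cv have "(\<Sum>i\<in>UNIV. complex_of_real (r i) * u i) = 0" by simp
  moreover have "\<forall>i. cmod (u i) = 1" using v w by (auto simp: u_def)
  ultimately show ?thesis by blast
qed



lemma mult_adj_00: assumes "X \<in> carrier_mat 1 1" "Y \<in> carrier_mat 1 1"
  shows "(X * mat_adjoint Y) $$ (0,0) = X$$(0,0) * cnj (Y$$(0,0))"
proof -
  have c: "mat_adjoint Y \<in> carrier_mat 1 1" using adj_carrier[OF assms(2)] .
  have "(X * mat_adjoint Y) $$ (0,0) = row X 0 \<bullet> col (mat_adjoint Y) 0"
    using carrier_matD[OF assms(1)] carrier_matD[OF c] by (subst index_mult_mat) auto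
  also have "\<dots> = X$$(0,0) * mat_adjoint Y $$ (0,0)"
    using carrier_matD[OF assms(1)] carrier_matD[OF c] by (simp add: scalar_prod_def)
  also have "mat_adjoint Y $$ (0,0) = cnj (Y$$(0,0))" using adj_index[OF assms(2)] by simp
  finally show ?thesis .
qed

lemma msum1_00: "msum 1 F $$ (0,0) = (\<Sum>i\<in>UNIV. F i $$ (0,0))"
  by (simp add: msum_def)

lemma mat11_eq: assumes "M \<in> carrier_mat 1 1" "N \<in> carrier_mat 1 1" "M $$ (0,0) = N $$ (0,0)"
  shows "M = N"
  using assms by (intro eq_matI) auto

lemma msum_carrier: "msum n F \<in> carrier_mat n n" by (simp add: msum_def)

lemma frob2_1: "X \<in> carrier_mat 1 1 \<Longrightarrow> frob2 X = (cmod (X$$(0,0)))^2"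
  by (simp add: frob2_def)

lemma brac1:
  fixes a b :: "'d::finite \<Rightarrow> real"
  shows "(a,b) \<in> Brac_s 1 \<longleftrightarrow> a \<in> simplex \<and> b \<in> simplex \<and>
    (\<exists>x y :: 'd \<Rightarrow> complex. (\<Sum>i\<in>UNIV. x i * cnj (y i)) = 0 \<and> (\<forall>i. (cmod (x i))^2 = a i \<and> (cmod (y i))^2 = b i))"
proof
  assume "(a,b) \<in> Brac_s 1"
  then obtain A B :: "'d \<Rightarrow> complex mat" where
    AB: "\<forall>i. A i \<in> carrier_mat 1 1 \<and> B i \<in> carrier_mat 1 1"
    "msum 1 (\<lambda>i. A i * mat_adjoint (B i)) = 0\<^sub>m 1 1"
    "\<forall>i. frob2 (A i) / real 1 = a i \<and> frob2 (B i) / real 1 = b i"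
    and s: "a \<in> simplex" "b \<in> simplex"
    unfolding Brac_s_def by blast
  have "msum 1 (\<lambda>i. A i * mat_adjoint (B i)) $$ (0,0) = 0" using AB(2) by simp
  then have "(\<Sum>i\<in>UNIV. A i $$ (0,0) * cnj (B i $$ (0,0))) = 0"
    unfolding msum1_00 using AB(1) mult_adj_00 by simp
  note e1 = this
  have e2: "\<forall>i. (cmod (A i $$ (0,0)))^2 = a i \<and> (cmod (B i $$ (0,0)))^2 = b i"
    using AB(1,3) frob2_1 by simp
  show "a \<in> simplex \<and> b \<in> simplex \<and>
    (\<exists>x y :: 'd \<Rightarrow> complex. (\<Sum>i\<in>UNIV. x i * cnj (y i)) = 0 \<and> (\<forall>i. (cmod (x i))^2 = a i \<and> (cmod (y i))^2 = b i))"
    apply (intro conjI s)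
    apply (rule exI[of _ "\<lambda>i. A i $$ (0,0)"], rule exI[of _ "\<lambda>i. B i $$ (0,0)"])
    using e1 e2 by simp
next
  assume "a \<in> simplex \<and> b \<in> simplex \<and>
    (\<exists>x y :: 'd \<Rightarrow> complex. (\<Sum>i\<in>UNIV. x i * cnj (y i)) = 0 \<and> (\<forall>i. (cmod (x i))^2 = a i \<and> (cmod (y i))^2 = b i))"
  then obtain x y :: "'d \<Rightarrow> complex" where s: "a \<in> simplex" "b \<in> simplex"
    and xy: "(\<Sum>i\<in>UNIV. x i * cnj (y i)) = 0" "\<forall>i. (cmod (x i))^2 = a i \<and> (cmod (y i))^2 = b i"
    by blast
  define A where "A i = mat 1 1 (\<lambda>_. x i)" for i
  define B where "B i = mat 1 1 (\<lambda>_. y i)" for i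
  have c: "\<forall>i. A i \<in> carrier_mat 1 1 \<and> B i \<in> carrier_mat 1 1" by (simp add: A_def B_def)
  have sq: "z * cnj z = complex_of_real ((cmod z)^2)" for z
    by (metis complex_norm_square of_real_power)
  have sa: "(\<Sum>i\<in>UNIV. complex_of_real (a i)) = 1" "(\<Sum>i\<in>UNIV. complex_of_real (b i)) = 1"
    using s unfolding simplex_def by (simp_all flip: of_real_sum)
  have ent: "msum 1 (\<lambda>i. X i * mat_adjoint (Y i)) $$ (0,0) = (\<Sum>i\<in>UNIV. X i $$ (0,0) * cnj (Y i $$ (0,0)))"
    if "\<And>i. X i \<in> carrier_mat 1 1" "\<And>i. Y i \<in> carrier_mat 1 1" for X Y :: "'d \<Rightarrow> complex mat"
    unfolding msum1_00 by (rule sum.cong[OF refl], rule mult_adj_00[OF that])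
  have A0: "A i $$ (0,0) = x i" "B i $$ (0,0) = y i" for i by (simp_all add: A_def B_def)
  have cA: "\<And>i. A i \<in> carrier_mat 1 1" "\<And>i. B i \<in> carrier_mat 1 1" using c by auto
  have m1: "msum 1 (\<lambda>i. A i * mat_adjoint (A i)) = 1\<^sub>m 1"
    by (rule mat11_eq[OF msum_carrier], simp, unfold ent[OF cA(1) cA(1)]) (use xy sa in \<open>simp add: A0 sq flip: of_real_sum\<close>)
  have m2: "msum 1 (\<lambda>i. B i * mat_adjoint (B i)) = 1\<^sub>m 1"
    by (rule mat11_eq[OF msum_carrier], simp, unfold ent[OF cA(2) cA(2)]) (use xy sa in \<open>simp add: A0 sq flip: of_real_sum\<close>)
  have m3: "msum 1 (\<lambda>i. A i * mat_adjoint (B i)) = 0\<^sub>m 1 1"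
    by (rule mat11_eq[OF msum_carrier], simp, unfold ent[OF cA(1) cA(2)]) (use xy in \<open>simp add: A0\<close>)
  have f: "\<forall>i. frob2 (A i) / real 1 = a i \<and> frob2 (B i) / real 1 = b i"
    using xy(2) by (simp add: frob2_1 A_def B_def)
  show "(a,b) \<in> Brac_s 1" unfolding Brac_s_def using s c m1 m2 m3 f by blast
qed

lemma brac1_eq: "(Brac_s 1 :: (('d::finite \<Rightarrow> real) \<times> ('d \<Rightarrow> real)) set) = Brac"
proof -
  have "p \<in> Brac_s 1 \<longleftrightarrow> p \<in> Brac" for p :: "('d \<Rightarrow> real) \<times> ('d \<Rightarrow> real)"
  proof -
  obtain a b where p: "p = (a,b)" by force
  show ?thesis proof
    assume "p \<in> Brac_s 1"
    then obtain x y :: "'d \<Rightarrow> complex" where s: "a \<in> simplex" "b \<in> simplex"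
      and xy: "(\<Sum>i\<in>UNIV. x i * cnj (y i)) = 0" "\<forall>i. (cmod (x i))^2 = a i \<and> (cmod (y i))^2 = b i"
      unfolding p brac1 by blast
    define z where "z i = x i * cnj (y i)" for i
    have sz: "sqrt (a i * b i) = cmod (z i)" for i
    proof -
      have "sqrt (a i) = cmod (x i)" "sqrt (b i) = cmod (y i)"
        using xy(2)[rule_format, of i] by (metis norm_ge_zero real_sqrt_unique)+
      then show ?thesis by (simp add: z_def real_sqrt_mult norm_mult)
    qed
    have "\<forall>i. sqrt (a i * b i) \<le> (\<Sum>j\<in>UNIV - {i}. sqrt (a j * b j))"
    proof
      fix i
      have "z i + (\<Sum>j\<in>UNIV - {i}. z j) = 0" using xy(1) unfolding z_def
        by (simp add: sum.remove[of UNIV i])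
      then have "z i = - (\<Sum>j\<in>UNIV - {i}. z j)" by (simp add: eq_neg_iff_add_eq_0)
      then have "cmod (z i) \<le> (\<Sum>j\<in>UNIV - {i}. cmod (z j))"
        by (simp add: norm_sum)
      then show "sqrt (a i * b i) \<le> (\<Sum>j\<in>UNIV - {i}. sqrt (a j * b j))" by (simp add: sz)
    qed
    then show "p \<in> Brac" using s p unfolding Brac_def by simp
  next
    assume "p \<in> Brac"
    then have s: "a \<in> simplex" "b \<in> simplex" and br: "\<forall>i. sqrt (a i * b i) \<le> (\<Sum>j\<in>UNIV - {i}. sqrt (a j * b j))"
      unfolding p Brac_def by auto
    have a0: "\<forall>i. 0 \<le> a i" "\<forall>i. 0 \<le> b i" using s unfolding simplex_def by auto
    obtain u where u: "\<forall>i. cmod (u i) = 1" "(\<Sum>i\<in>UNIV. complex_of_real (sqrt (a i * b i)) * u i) = 0"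
      using polygon[of "\<lambda>i. sqrt (a i * b i)"] br a0 by auto
    define x where "x i = complex_of_real (sqrt (a i))" for i
    define y where "y i = complex_of_real (sqrt (b i)) * cnj (u i)" for i
    have "(\<Sum>i\<in>UNIV. x i * cnj (y i)) = 0"
      using u(2) by (simp add: x_def y_def real_sqrt_mult mult.assoc)
    moreover have "\<forall>i. (cmod (x i))^2 = a i \<and> (cmod (y i))^2 = b i"
      using a0 u(1) by (simp add: x_def y_def norm_mult)
    ultimately show "p \<in> Brac_s 1" unfolding p brac1 using s by blast
  qed
  qed
  then show ?thesis by blast
qed


theorem corollary3p6:
  fixes k :: nat and s :: "nat \<Rightarrow> nat"
    and P :: "nat \<Rightarrow> ('d::finite \<Rightarrow> real) \<times> ('d \<Rightarrow> real)"
  assumes "card (UNIV :: 'd set) \<ge> 2"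
    and "k \<ge> 1"
    and "\<forall>j<k. s j \<ge> 1"
    and "\<forall>j<k. P j \<in> Brac_s (s j)"
  shows "((\<lambda>i. \<Sum>j<k. real (s j) / real (\<Sum>l<k. s l) * fst (P j) i),
          (\<lambda>i. \<Sum>j<k. real (s j) / real (\<Sum>l<k. s l) * snd (P j) i))
           \<in> Brac_s (\<Sum>l<k. s l)
       \<and> (Brac_s 1 :: (('d \<Rightarrow> real) \<times> ('d \<Rightarrow> real)) set) = Brac
       \<and> (\<forall>t\<ge>1. (Brac :: (('d \<Rightarrow> real) \<times> ('d \<Rightarrow> real)) set) \<subseteq> Brac_s t)"
proof (intro conjI allI impI subsetI)
  show "((\<lambda>i. \<Sum>j<k. real (s j) / real (\<Sum>l<k. s l) * fst (P j) i),
          (\<lambda>i. \<Sum>j<k. real (s j) / real (\<Sum>l<k. s l) * snd (P j) i))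
           \<in> Brac_s (\<Sum>l<k. s l)" using brac_s_sum assms(2-4) by blast
  show "(Brac_s 1 :: (('d \<Rightarrow> real) \<times> ('d \<Rightarrow> real)) set) = Brac" by (rule brac1_eq)
next
  fix t :: nat and p :: "('d \<Rightarrow> real) \<times> ('d \<Rightarrow> real)"
  assume t: "1 \<le> t" and p: "p \<in> Brac"
  have p1: "p \<in> Brac_s 1" using p brac1_eq by blast
  have "((\<lambda>i. \<Sum>j<t. real ((\<lambda>_. 1::nat) j) / real (\<Sum>l<t. (\<lambda>_. 1::nat) l) * fst ((\<lambda>_. p) j) i),
          (\<lambda>i. \<Sum>j<t. real ((\<lambda>_. 1::nat) j) / real (\<Sum>l<t. (\<lambda>_. 1::nat) l) * snd ((\<lambda>_. p) j) i))
           \<in> Brac_s (\<Sum>l<t. (\<lambda>_. 1::nat) l)"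
    by (rule brac_s_sum) (use t p1 in auto)
  moreover have "((\<lambda>i. \<Sum>j<t. real ((\<lambda>_. 1::nat) j) / real (\<Sum>l<t. (\<lambda>_. 1::nat) l) * fst ((\<lambda>_. p) j) i),
          (\<lambda>i. \<Sum>j<t. real ((\<lambda>_. 1::nat) j) / real (\<Sum>l<t. (\<lambda>_. 1::nat) l) * snd ((\<lambda>_. p) j) i)) = p"
    using t by (simp add: prod_eq_iff)
  ultimately show "p \<in> Brac_s t" by simp
qed

end
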